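(* Let $k$ be a field of characteristic $\ne 2$ and let $n$ be a positive even integer. Then there is an isomorphism of symmetric bilinear forms over $k$: \[ \phi^{\mathrm{even}}_n \cong \begin{cases} \phi^{\mathrm{odd}}_n & \text{if } n \equiv 0 \bmod 4,\\[2pt] \left\langle 2\binom{n}{n/2}\right\rangle \oplus \phi^{\mathrm{odd}}_n & \text{if } n \equiv 2 \bmod 4. \end{cases} \]
   Context: For $\lambda \in k$, $\langle \lambda \rangle$ denotes a one-dimensional $k$-vector space with basis $e$ and symmetric bilinear form $(e,e)\mapsto\lambda$ (possibly degenerate if $\lambda = 0$ in $k$); $\oplus$ is orthogonal sum. Define $\phi^{\mathrm{odd}}_n := \bigoplus_{0 \le i < n/2,\ i \text{ odd}} \langle \binom{n}{i}\rangle$ and $\phi^{\mathrm{even}}_n := \bigoplus_{0 \le i < n/2,\ i \text{ even}} \langle \binom{n}{i}\rangle$, with binomial coefficients viewed as elements of $k$. *)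

theory Defs
  imports Main
begin

text \<open>A diagonal symmetric bilinear form <d_0> (+) ... (+) <d_{m-1}> is represented by the
list [d_0,...,d_{m-1}]; its underlying space is k^m, realised as the functions
nat => k vanishing outside {0..<m}. Orthogonal sum of diagonal forms is list append.\<close>

definition coord_space :: "nat \<Rightarrow> (nat \<Rightarrow> 'a::field) set" where
  "coord_space m = {x. \<forall>i\<ge>m. x i = 0}"

definition diag_form :: "'a::field list \<Rightarrow> (nat \<Rightarrow> 'a) \<Rightarrow> (nat \<Rightarrow> 'a) \<Rightarrow> 'a" where
  "diag_form ds x y = (\<Sum>i<length ds. ds ! i * x i * y i)"

definition isometric :: "'a::field list \<Rightarrow> 'a list \<Rightarrow> bool" where
  "isometric ds es \<longleftrightarrow> (\<exists>f. bij_betw f (coord_space (length ds)) (coord_space (length es))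
      \<and> (\<forall>x\<in>coord_space (length ds). \<forall>y\<in>coord_space (length ds). f (\<lambda>i. x i + y i) = (\<lambda>i. f x i + f y i))
      \<and> (\<forall>c. \<forall>x\<in>coord_space (length ds). f (\<lambda>i. c * x i) = (\<lambda>i. c * f x i))
      \<and> (\<forall>x\<in>coord_space (length ds). \<forall>y\<in>coord_space (length ds).
            diag_form es (f x) (f y) = diag_form ds x y))"

definition phi_odd :: "nat \<Rightarrow> 'a::field list" where
  "phi_odd n = map (\<lambda>i. of_nat (n choose i)) (filter (\<lambda>i. odd i \<and> 2 * i < n) [0..<n])"

definition phi_even :: "nat \<Rightarrow> 'a::field list" where
  "phi_even n = map (\<lambda>i. of_nat (n choose i)) (filter (\<lambda>i. even i \<and> 2 * i < n) [0..<n])"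

end

theory Submission
  imports Defs Complex_Main
begin

definition Mg :: "nat \<Rightarrow> nat \<Rightarrow> nat \<Rightarrow> 'b::comm_ring_1" where
"Mg n i j = (\<Sum>k\<le>i. \<Sum>l\<le>n-i. if k + l = j then of_nat (i choose k) * of_nat ((n-i) choose l) * (-1)^(n-i-l) else 0)"

lemma Mg_of_int: "(Mg n i j :: 'b::comm_ring_1) = of_int (Mg n i j)"
  unfolding Mg_def of_int_sum by (intro sum.cong refl) (simp only: of_int_mult of_int_of_nat_eq of_int_power of_int_minus of_int_1 of_int_0 if_distrib[of of_int])

lemma delta_sum:
  fixes X :: "'b::comm_ring_1" and m n :: nat
  assumes "m \<le> n"
  shows "(\<Sum>j\<le>n. (if m = j then X else 0) * f j) = X * f m"
proof -
  have "(\<Sum>j\<le>n. (if m = j then X else 0) * f j) = (\<Sum>j\<le>n. if m = j then X * f j else 0)"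
    by (rule sum.cong) auto
  also have "\<dots> = X * f m" using assms by (simp add: sum.delta sum.delta')
  finally show ?thesis .
qed

lemma L:
  fixes a b :: "'b::comm_ring_1"
  assumes "i \<le> n"
  shows "(\<Sum>j\<le>n. Mg n i j * a^j * b^(n-j)) = (a+b)^i * (a-b)^(n-i)"
proof -
  have "(a+b)^i * (a-b)^(n-i) = (\<Sum>k\<le>i. of_nat (i choose k) * a^k * b^(i-k)) *
     (\<Sum>l\<le>n-i. of_nat ((n-i) choose l) * a^l * (-b)^(n-i-l))"
    using binomial_ring[of a b i] binomial_ring[of a "-b" "n-i"] by simp
  also have "\<dots> = (\<Sum>k\<le>i. \<Sum>l\<le>n-i. of_nat (i choose k) * of_nat ((n-i) choose l) * (-1)^(n-i-l) * (a^(k+l) * b^(n-(k+l))))"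
    unfolding sum_product
  proof (intro sum.cong refl)
    fix k l assume k: "k \<in> {..i}" and l: "l \<in> {..n-i}"
    have hb: "b^(i-k) * b^(n-i-l) = b^(n-(k+l))" using k l assms by (simp add: power_add[symmetric])
    show "of_nat (i choose k) * a ^ k * b ^ (i - k) * (of_nat (n - i choose l) * a ^ l * (- b) ^ (n - i - l)) =
         of_nat (i choose k) * of_nat (n - i choose l) * (- 1) ^ (n - i - l) * (a ^ (k + l) * b ^ (n - (k + l)))"
      by (simp only: power_minus[of b] power_add hb[symmetric] mult_ac)
  qed
  also have "\<dots> = (\<Sum>k\<le>i. \<Sum>l\<le>n-i. \<Sum>j\<le>n. (if k + l = j then of_nat (i choose k) * of_nat ((n-i) choose l) * (-1)^(n-i-l) else 0) * (a^j * b^(n-j)))"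
  proof (intro sum.cong refl)
    fix k l assume k: "k \<in> {..i}" and l: "l \<in> {..n-i}"
    have "k + l \<le> n" using k l assms by auto
    then show "of_nat (i choose k) * of_nat (n - i choose l) * (- 1) ^ (n - i - l) * (a ^ (k + l) * b ^ (n - (k + l))) =
         (\<Sum>j\<le>n. (if k + l = j then of_nat (i choose k) * of_nat (n - i choose l) * (- 1) ^ (n - i - l) else 0) * (a ^ j * b ^ (n - j)))"
      by (rule delta_sum[symmetric])
  qed
  also have "\<dots> = (\<Sum>k\<le>i. \<Sum>j\<le>n. \<Sum>l\<le>n-i. (if k + l = j then of_nat (i choose k) * of_nat ((n-i) choose l) * (-1)^(n-i-l) else 0) * (a^j * b^(n-j)))"
    by (rule sum.cong[OF refl], rule sum.swap)
  also have "\<dots> = (\<Sum>j\<le>n. \<Sum>k\<le>i. \<Sum>l\<le>n-i. (if k + l = j then of_nat (i choose k) * of_nat ((n-i) choose l) * (-1)^(n-i-l) else 0) * (a^j * b^(n-j)))"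
    by (rule sum.swap)
  also have "\<dots> = (\<Sum>j\<le>n. Mg n i j * (a^j * b^(n-j)))"
    by (simp only: Mg_def sum_distrib_right)
  finally show ?thesis by (simp only: mult.assoc)
qed

lemma rev_sum: "(\<Sum>j\<le>(n::nat). f (n - j)) = (\<Sum>j\<le>n. f j)"
  by (rule sum.reindex_bij_witness[where i="\<lambda>j. n-j" and j="\<lambda>j. n-j"]) (auto simp: diff_diff_cancel)

lemma L1:
  fixes a :: "'b::comm_ring_1"
  assumes "i \<le> n"
  shows "(\<Sum>j\<le>n. Mg n i j * a^j) = (a+1)^i * (a-1)^(n-i)"
  using L[OF assms, of a 1] by simp

lemma F2_real:
  assumes "i \<le> n" "l \<le> n"
  shows "(\<Sum>j\<le>n. Mg n i j * Mg n j l) = (if i = l then 2^n else (0::real))"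
proof -
  have "\<forall>a::real. (\<Sum>l\<le>n. (\<Sum>j\<le>n. Mg n i j * Mg n j l) * a^l) = (\<Sum>l\<le>n. (if l = i then 2^n else 0) * a^l)"
  proof
    fix a :: real
    have "(\<Sum>l\<le>n. (\<Sum>j\<le>n. Mg n i j * Mg n j l) * a^l) = (\<Sum>l\<le>n. \<Sum>j\<le>n. Mg n i j * (Mg n j l * a^l))"
      by (simp only: sum_distrib_right mult.assoc)
    also have "\<dots> = (\<Sum>j\<le>n. \<Sum>l\<le>n. Mg n i j * (Mg n j l * a^l))"
      by (rule sum.swap)
    also have "\<dots> = (\<Sum>j\<le>n. Mg n i j * (\<Sum>l\<le>n. Mg n j l * a^l))"
      by (simp only: sum_distrib_left)
    also have "\<dots> = (\<Sum>j\<le>n. Mg n i j * ((a+1)^j * (a-1)^(n-j)))"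
      by (intro sum.cong refl) (simp add: L1)
    also have "\<dots> = ((a+1)+(a-1))^i * ((a+1)-(a-1))^(n-i)"
      using L[OF assms(1), of "a+1" "a-1"] by (simp add: mult.assoc)
    also have "\<dots> = 2^n * a^i"
      using assms by (simp add: power_mult_distrib power_add[symmetric])
    also have "\<dots> = (\<Sum>l\<le>n. (if l = i then 2^n else 0) * a^l)"
      using assms by (simp add: if_distrib if_distribR sum.delta cong: if_cong)
    finally show "(\<Sum>l\<le>n. (\<Sum>j\<le>n. Mg n i j * Mg n j l) * a^l) = (\<Sum>l\<le>n. (if l = i then 2^n else 0) * a^l)" .
  qed
  then have "\<forall>l'\<le>n. (\<Sum>j\<le>n. Mg n i j * Mg n j l') = (if l' = i then 2^n else (0::real))"
    by (subst (asm) polyfun_eq_coeffs) 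
  then show ?thesis using assms by auto
qed

lemma F3_real:
  assumes "i \<le> n" "j \<le> n" "even n"
  shows "(Mg n i (n-j) :: real) = (-1)^i * Mg n i j"
proof -
  have s: "(-1::real)^(n-i) = (-1)^i"
    using assms by (simp add: minus_one_power_iff)
  have "\<forall>a::real. (\<Sum>j\<le>n. Mg n i (n-j) * a^j) = (\<Sum>j\<le>n. ((-1)^i * Mg n i j) * a^j)"
  proof
    fix a :: real
    have "(\<Sum>j\<le>n. Mg n i (n-j) * a^j) = (\<Sum>j\<le>n. Mg n i (n - j) * 1 ^ (n - j) * a ^ (n - (n - j)))"
      by (intro sum.cong refl) simp
    also have "\<dots> = (\<Sum>j\<le>n. Mg n i j * 1^j * a^(n-j))"
      by (rule rev_sum[where f="\<lambda>j. Mg n i j * 1^j * a^(n-j)"])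
    also have "\<dots> = (1+a)^i * (1-a)^(n-i)" by (rule L[OF assms(1)])
    also have "\<dots> = (a+1)^i * ((-1)*(a-1))^(n-i)"
    proof -
      have "1+a = a+1" "1-a = (-1)*(a-1)" by simp_all
      then show ?thesis by (simp only:)
    qed
    also have "\<dots> = (-1)^(n-i) * ((a+1)^i * (a-1)^(n-i))"
      by (simp only: power_mult_distrib mult.left_commute)
    also have "\<dots> = (-1)^i * ((a+1)^i * (a-1)^(n-i))"
      by (simp only: s)
    also have "\<dots> = (-1)^i * (\<Sum>j\<le>n. Mg n i j * a^j)" by (simp only: L1[OF assms(1)])
    also have "\<dots> = (\<Sum>j\<le>n. ((-1)^i * Mg n i j) * a^j)"
      by (simp only: sum_distrib_left mult.assoc)
    finally show "(\<Sum>j\<le>n. Mg n i (n-j) * a^j) = (\<Sum>j\<le>n. ((-1)^i * Mg n i j) * a^j)" .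
  qed
  then have "\<forall>j'\<le>n. Mg n i (n-j') = (-1)^i * (Mg n i j' :: real)"
    by (subst (asm) polyfun_eq_coeffs)
  then show ?thesis using assms by blast
qed

lemma F4_real:
  assumes "i \<le> n" "j \<le> n" "even n"
  shows "(Mg n (n-i) j :: real) = (-1)^j * Mg n i j"
proof -
  have ni: "n - i + i = n" "n - (n - i) = i" using assms by simp_all
  have s: "(-1::real)^(n-i) * (-1)^i = 1"
  proof -
    have "(-1::real)^(n-i) * (-1)^i = (-1)^(n-i+i)" by (rule power_add[symmetric])
    also have "\<dots> = (-1)^n" by (simp only: ni(1))
    also have "\<dots> = 1" using assms(3) by simp
    finally show ?thesis .
  qed
  have "\<forall>a::real. (\<Sum>j\<le>n. Mg n (n-i) j * a^j) = (\<Sum>j\<le>n. ((-1)^j * Mg n i j) * a^j)"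
  proof
    fix a :: real
    have "(\<Sum>j\<le>n. Mg n (n-i) j * a^j) = (a+1)^(n-i) * (a-1)^i"
      using L1[OF diff_le_self[of n i], of a] by (simp only: ni)
    also have "\<dots> = ((-1)^(n-i) * (-1)^i) * ((a+1)^(n-i) * (a-1)^i)" by (simp only: s mult_1_left)
    also have "\<dots> = ((-1)^i * (a-1)^i) * ((-1)^(n-i) * (a+1)^(n-i))"
      by (simp only: mult.assoc mult.left_commute mult.commute)
    also have "\<dots> = ((-1)*(a-1))^i * ((-1)*(a+1))^(n-i)"
      by (simp only: power_mult_distrib)
    also have "\<dots> = (-a+1)^i * (-a-1)^(n-i)"
    proof -
      have "(-1)*(a-1) = -a+1" "(-1)*(a+1) = -a-1" by simp_all
      then show ?thesis by (simp only:)
    qed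
    also have "\<dots> = (\<Sum>j\<le>n. Mg n i j * (-a)^j)" by (rule L1[OF assms(1), of "-a", symmetric])
    also have "\<dots> = (\<Sum>j\<le>n. ((-1)^j * Mg n i j) * a^j)"
      by (intro sum.cong refl) (simp only: power_minus[of a] mult_ac)
    finally show "(\<Sum>j\<le>n. Mg n (n-i) j * a^j) = (\<Sum>j\<le>n. ((-1)^j * Mg n i j) * a^j)" .
  qed
  then have "\<forall>j'\<le>n. Mg n (n-i) j' = (-1)^j' * (Mg n i j' :: real)"
    by (subst (asm) polyfun_eq_coeffs)
  then show ?thesis using assms by blast
qed

lemma F1_real:
  assumes "j \<le> n" "l \<le> n"
  shows "(\<Sum>i\<le>n. of_nat (n choose i) * Mg n i j * Mg n i l) = (if j = l then 2^n * of_nat (n choose j) else (0::real))"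
proof -
  define X where "X j l = (\<Sum>i\<le>n. of_nat (n choose i) * Mg n i j * (Mg n i l :: real))" for j l
  define Y where "Y j l = (if j = l then 2^n * of_nat (n choose j) else (0::real))" for j l
  have key: "(\<Sum>j\<le>n. (\<Sum>l\<le>n. X j l * c^l) * a^j) = (\<Sum>j\<le>n. (\<Sum>l\<le>n. Y j l * c^l) * a^j)" for a c :: real
  proof -
    have "(\<Sum>j\<le>n. (\<Sum>l\<le>n. X j l * c^l) * a^j) = (\<Sum>j\<le>n. \<Sum>l\<le>n. \<Sum>i\<le>n. of_nat (n choose i) * (Mg n i j * a^j) * (Mg n i l * c^l))"
      unfolding X_def by (simp only: sum_distrib_right) (simp only: mult_ac)
    also have "\<dots> = (\<Sum>j\<le>n. \<Sum>i\<le>n. \<Sum>l\<le>n. of_nat (n choose i) * (Mg n i j * a^j) * (Mg n i l * c^l))"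
      by (rule sum.cong[OF refl], rule sum.swap)
    also have "\<dots> = (\<Sum>i\<le>n. \<Sum>j\<le>n. \<Sum>l\<le>n. of_nat (n choose i) * (Mg n i j * a^j) * (Mg n i l * c^l))"
      by (rule sum.swap)
    also have "\<dots> = (\<Sum>i\<le>n. of_nat (n choose i) * (\<Sum>j\<le>n. Mg n i j * a^j) * (\<Sum>l\<le>n. Mg n i l * c^l))"
      by (simp only: sum_distrib_left sum_distrib_right) (rule sum.cong[OF refl], rule sum.swap)
    also have "\<dots> = (\<Sum>i\<le>n. of_nat (n choose i) * ((a+1)^i * (a-1)^(n-i)) * ((c+1)^i * (c-1)^(n-i)))"
      by (intro sum.cong refl) (simp only: L1 atMost_iff)
    also have "\<dots> = (\<Sum>i\<le>n. of_nat (n choose i) * ((a+1)*(c+1))^i * ((a-1)*(c-1))^(n-i))"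
      by (simp only: power_mult_distrib mult_ac)
    also have "\<dots> = ((a+1)*(c+1) + (a-1)*(c-1))^n"
      by (rule binomial_ring[symmetric])
    also have "\<dots> = 2^n * (c*a + 1)^n"
      by (simp add: algebra_simps power_mult_distrib[symmetric])
    also have "\<dots> = 2^n * (\<Sum>j\<le>n. of_nat (n choose j) * (c*a)^j * 1^(n-j))"
      by (simp only: binomial_ring)
    also have "\<dots> = (\<Sum>j\<le>n. (2^n * of_nat (n choose j) * c^j) * a^j)"
      by (simp add: sum_distrib_left power_mult_distrib mult_ac)
    also have "\<dots> = (\<Sum>j\<le>n. (\<Sum>l\<le>n. Y j l * c^l) * a^j)"
    proof (rule sum.cong[OF refl])
      fix j assume "j \<in> {..n}"
      then have "(\<Sum>l\<le>n. Y j l * c^l) = 2^n * of_nat (n choose j) * c^j"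
        unfolding Y_def using delta_sum[where f="\<lambda>l. c^l" and m=j and n=n] by simp
      then show "(2^n * of_nat (n choose j) * c^j) * a^j = (\<Sum>l\<le>n. Y j l * c^l) * a^j" by simp
    qed
    finally show ?thesis .
  qed
  have "\<forall>j\<le>n. (\<Sum>l\<le>n. X j l * c^l) = (\<Sum>l\<le>n. Y j l * c^l)" for c :: real
  proof -
    have "\<forall>a::real. (\<Sum>j\<le>n. (\<Sum>l\<le>n. X j l * c^l) * a^j) = (\<Sum>j\<le>n. (\<Sum>l\<le>n. Y j l * c^l) * a^j)"
      using key by blast
    then show ?thesis by (subst (asm) polyfun_eq_coeffs)
  qed
  then have "\<forall>j\<le>n. \<forall>l\<le>n. X j l = Y j l"
    by (metis polyfun_eq_coeffs)
  then show ?thesis using assms unfolding X_def Y_def by blast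
qed

lemma iso_mat:
  fixes ds es :: "'a::field list" and P Q :: "nat \<Rightarrow> nat \<Rightarrow> 'a"
  assumes QP: "\<And>p p'. p < length ds \<Longrightarrow> p' < length ds \<Longrightarrow> (\<Sum>q<length es. Q p q * P q p') = (if p = p' then 1 else 0)"
  and PQ: "\<And>q q'. q < length es \<Longrightarrow> q' < length es \<Longrightarrow> (\<Sum>p<length ds. P q p * Q p q') = (if q = q' then 1 else 0)"
  and FF: "\<And>p p'. p < length ds \<Longrightarrow> p' < length ds \<Longrightarrow> (\<Sum>q<length es. es!q * P q p * P q p') = (if p = p' then ds!p else 0)"
  shows "isometric ds es"
proof -
  define a where "a = length ds"
  define b where "b = length es"
  define f where "f x = (\<lambda>q. if q < b then \<Sum>p<a. P q p * x p else 0)" for x :: "nat \<Rightarrow> 'a"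
  define g where "g y = (\<lambda>p. if p < a then \<Sum>q<b. Q p q * y q else 0)" for y :: "nat \<Rightarrow> 'a"
  have fB: "f x \<in> coord_space b" for x unfolding f_def coord_space_def by auto
  have gA: "g y \<in> coord_space a" for y unfolding g_def coord_space_def by auto
  have gf: "g (f x) = x" if x: "x \<in> coord_space a" for x
  proof
    fix p
    show "g (f x) p = x p"
    proof (cases "p < a")
      case True
      have "g (f x) p = (\<Sum>q<b. Q p q * (\<Sum>p'<a. P q p' * x p'))"
        unfolding g_def f_def using True by simp
      also have "\<dots> = (\<Sum>q<b. \<Sum>p'<a. Q p q * P q p' * x p')"
        by (simp only: sum_distrib_left mult.assoc)
      also have "\<dots> = (\<Sum>p'<a. \<Sum>q<b. Q p q * P q p' * x p')"
        by (rule sum.swap)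
      also have "\<dots> = (\<Sum>p'<a. (if p = p' then 1 else 0) * x p')"
        by (rule sum.cong[OF refl]) (subst sum_distrib_right[symmetric], simp add: QP True[unfolded a_def] a_def b_def)
      also have "\<dots> = x p" using True by (simp add: if_distrib if_distribR sum.delta cong: if_cong)
      finally show ?thesis .
    next
      case False
      then show ?thesis using x unfolding g_def coord_space_def by auto
    qed
  qed
  have fg: "f (g y) = y" if y: "y \<in> coord_space b" for y
  proof
    fix q
    show "f (g y) q = y q"
    proof (cases "q < b")
      case True
      have "f (g y) q = (\<Sum>p<a. P q p * (\<Sum>q'<b. Q p q' * y q'))"
        unfolding g_def f_def using True by simp
      also have "\<dots> = (\<Sum>p<a. \<Sum>q'<b. P q p * Q p q' * y q')"
        by (simp only: sum_distrib_left mult.assoc)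
      also have "\<dots> = (\<Sum>q'<b. \<Sum>p<a. P q p * Q p q' * y q')"
        by (rule sum.swap)
      also have "\<dots> = (\<Sum>q'<b. (if q = q' then 1 else 0) * y q')"
        by (rule sum.cong[OF refl]) (subst sum_distrib_right[symmetric], simp add: PQ True[unfolded b_def] a_def b_def)
      also have "\<dots> = y q" using True by (simp add: if_distrib if_distribR sum.delta cong: if_cong)
      finally show ?thesis .
    next
      case False
      then show ?thesis using y unfolding f_def coord_space_def by auto
    qed
  qed
  have bij: "bij_betw f (coord_space a) (coord_space b)"
    by (rule bij_betw_byWitness[where f'=g]) (use gf fg fB gA in auto)
  have add: "f (\<lambda>i. x i + y i) = (\<lambda>i. f x i + f y i)" for x y
    unfolding f_def by (auto simp: distrib_left sum.distrib)
  have smul: "f (\<lambda>i. c * x i) = (\<lambda>i. c * f x i)" for c x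
    unfolding f_def by (auto simp: sum_distrib_left mult_ac)
  have form: "diag_form es (f x) (f y) = diag_form ds x y" for x y
  proof -
    have "diag_form es (f x) (f y) = (\<Sum>q<b. es!q * (\<Sum>p<a. P q p * x p) * (\<Sum>p'<a. P q p' * y p'))"
      unfolding diag_form_def f_def b_def by simp
    also have "\<dots> = (\<Sum>q<b. \<Sum>p<a. \<Sum>p'<a. es!q * P q p * P q p' * (x p * y p'))"
      by (simp only: sum_distrib_left sum_distrib_right sum_product) (rule sum.cong[OF refl], subst sum.swap, simp only: mult_ac)
    also have "\<dots> = (\<Sum>p<a. \<Sum>q<b. \<Sum>p'<a. es!q * P q p * P q p' * (x p * y p'))"
      by (rule sum.swap)
    also have "\<dots> = (\<Sum>p<a. \<Sum>p'<a. \<Sum>q<b. es!q * P q p * P q p' * (x p * y p'))"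
      by (rule sum.cong[OF refl], rule sum.swap)
    also have "\<dots> = (\<Sum>p<a. \<Sum>p'<a. (if p = p' then ds!p else 0) * (x p * y p'))"
      by (intro sum.cong refl) (subst sum_distrib_right[symmetric], simp add: FF a_def b_def)
    also have "\<dots> = (\<Sum>p<a. ds!p * (x p * y p))"
      by (rule sum.cong[OF refl]) (simp add: if_distrib if_distribR sum.delta cong: if_cong)
    also have "\<dots> = diag_form ds x y"
      unfolding diag_form_def a_def by (simp add: mult_ac)
    finally show ?thesis .
  qed
  show ?thesis
    unfolding isometric_def
    using bij add smul form unfolding a_def b_def by blast
qed

abbreviation Mi :: "nat \<Rightarrow> nat \<Rightarrow> nat \<Rightarrow> int" where "Mi \<equiv> Mg"

lemma F1i:
  assumes "j \<le> n" "l \<le> n"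
  shows "(\<Sum>i\<le>n. int (n choose i) * Mi n i j * Mi n i l) = (if j = l then 2^n * int (n choose j) else 0)"
proof -
  have "real_of_int (\<Sum>i\<le>n. int (n choose i) * Mi n i j * Mi n i l) = real_of_int (if j = l then 2^n * int (n choose j) else 0)"
    using F1_real[OF assms] by (simp add: Mg_of_int[where 'b=real] of_int_sum)
  then show ?thesis by (simp only: of_int_eq_iff)
qed

lemma F2i:
  assumes "i \<le> n" "l \<le> n"
  shows "(\<Sum>j\<le>n. Mi n i j * Mi n j l) = (if i = l then 2^n else 0)"
proof -
  have "real_of_int (\<Sum>j\<le>n. Mi n i j * Mi n j l) = real_of_int (if i = l then 2^n else 0)"
    using F2_real[OF assms] by (simp add: Mg_of_int[where 'b=real] of_int_sum)
  then show ?thesis by (simp only: of_int_eq_iff)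
qed

lemma F3i:
  assumes "i \<le> n" "j \<le> n" "even n"
  shows "Mi n i (n-j) = (-1)^i * Mi n i j"
proof -
  have "real_of_int (Mi n i (n-j)) = real_of_int ((-1)^i * Mi n i j)"
    using F3_real[OF assms] by (simp add: Mg_of_int[where 'b=real])
  then show ?thesis by (simp only: of_int_eq_iff)
qed

lemma F4i:
  assumes "i \<le> n" "j \<le> n" "even n"
  shows "Mi n (n-i) j = (-1)^j * Mi n i j"
proof -
  have "real_of_int (Mi n (n-i) j) = real_of_int ((-1)^j * Mi n i j)"
    using F4_real[OF assms] by (simp add: Mg_of_int[where 'b=real])
  then show ?thesis by (simp only: of_int_eq_iff)
qed

lemma odd_lt: "(\<Sum>i<(m::nat). if odd i then f i else (0::'b::comm_monoid_add)) = (\<Sum>q<m div 2. f (2*q+1))"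
proof (induction m)
  case 0 then show ?case by simp
next
  case (Suc m)
  show ?case
  proof (cases "odd m")
    case True
    then have "Suc m div 2 = Suc (m div 2)" "2 * (m div 2) + 1 = m" by presburger+
    then show ?thesis using Suc True by (simp add: add.commute)
  next
    case False
    then have "Suc m div 2 = m div 2" by presburger
    then show ?thesis using Suc False by simp
  qed
qed

lemma even_lt: "(\<Sum>i<(m::nat). if even i then f i else (0::'b::comm_monoid_add)) = (\<Sum>p<(m+1) div 2. f (2*p))"
proof (induction m)
  case 0 then show ?case by simp
next
  case (Suc m)
  show ?case
  proof (cases "even m")
    case True
    then have "(Suc m + 1) div 2 = Suc ((m+1) div 2)" "2 * ((m+1) div 2) = m" by presburger+
    then show ?thesis using Suc True by (simp add: add.commute)
  next
    case False
    then have "(Suc m + 1) div 2 = (m+1) div 2" by presburger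
    then show ?thesis using Suc False by simp
  qed
qed

lemma split_sym:
  fixes g :: "nat \<Rightarrow> 'b::comm_ring_1"
  assumes "\<And>i. i \<le> 2*m \<Longrightarrow> g (2*m - i) = g i"
  shows "(\<Sum>i\<le>2*m. g i) = 2 * (\<Sum>i<m. g i) + g m"
proof -
  have dec: "{..2*m} = {..<m} \<union> insert m {m<..2*m}" by auto
  have "(\<Sum>i\<le>2*m. g i) = (\<Sum>i<m. g i) + (\<Sum>i\<in>insert m {m<..2*m}. g i)"
    unfolding dec by (rule sum.union_disjoint) auto
  also have "(\<Sum>i\<in>insert m {m<..2*m}. g i) = g m + (\<Sum>i\<in>{m<..2*m}. g i)"
    by (rule sum.insert) auto
  also have "(\<Sum>i\<in>{m<..2*m}. g i) = (\<Sum>i<m. g (2*m - i))"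
    by (rule sum.reindex_bij_witness[where i="\<lambda>i. 2*m - i" and j="\<lambda>i. 2*m - i"]) auto
  also have "\<dots> = (\<Sum>i<m. g i)" by (rule sum.cong) (auto simp: assms)
  finally show ?thesis by (simp only: mult_2 add.assoc add.commute add.left_commute)
qed

lemma sym_odd_sum:
  fixes f :: "nat \<Rightarrow> int"
  assumes n: "n = 2*m" and sym: "\<And>i. i \<le> n \<Longrightarrow> f (n - i) = f i"
  shows "(\<Sum>i\<le>n. if odd i then f i else 0) = 2 * (\<Sum>q<m div 2. f (2*q+1)) + (if odd m then f m else 0)"
proof -
  have "(\<Sum>i\<le>2*m. if odd i then f i else 0) = 2 * (\<Sum>i<m. if odd i then f i else 0) + (if odd m then f m else 0)"
  proof (rule split_sym)
    fix i assume "i \<le> 2*m"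
    then have "odd (2*m - i) = odd i" "f (2*m - i) = f i" using sym n by auto
    then show "(if odd (2*m - i) then f (2*m - i) else 0) = (if odd i then f i else 0)" by simp
  qed
  then show ?thesis using n by (simp add: odd_lt)
qed

lemma sym_even_sum:
  fixes f :: "nat \<Rightarrow> int"
  assumes n: "n = 2*m" and sym: "\<And>i. i \<le> n \<Longrightarrow> f (n - i) = f i"
  shows "(\<Sum>i\<le>n. if even i then f i else 0) = 2 * (\<Sum>p<(m+1) div 2. f (2*p)) + (if even m then f m else 0)"
proof -
  have "(\<Sum>i\<le>2*m. if even i then f i else 0) = 2 * (\<Sum>i<m. if even i then f i else 0) + (if even m then f m else 0)"
  proof (rule split_sym)
    fix i assume "i \<le> 2*m"
    then have "even (2*m - i) = even i" "f (2*m - i) = f i" using sym n by auto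
    then show "(if even (2*m - i) then f (2*m - i) else 0) = (if even i then f i else 0)" by simp
  qed
  then show ?thesis using n by (simp add: even_lt)
qed

lemma Ia:
  assumes n: "n = 2*m" and p: "2*p < m" and p': "2*p' < m"
  shows "4 * (\<Sum>q<m div 2. Mi n (2*p) (2*q+1) * Mi n (2*q+1) (2*p')) + (if odd m then 2 * (Mi n (2*p) m * Mi n m (2*p')) else 0) = (if p = p' then 2^n else 0)"
proof -
  define f where "f i = Mi n (2*p) i * Mi n i (2*p')" for i
  have ev: "even n" using n by simp
  have S1: "(\<Sum>i\<le>n. f i) = (if p = p' then 2^n else 0)"
    using F2i[of "2*p" n "2*p'"] n p p' unfolding f_def by auto
  have S2: "(\<Sum>i\<le>n. Mi n (2*p) i * Mi n i (n - 2*p')) = 0"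
    using F2i[of "2*p" n "n - 2*p'"] n p p' by auto
  have "(\<Sum>i\<le>n. if odd i then 2 * f i else 0) = (\<Sum>i\<le>n. f i - Mi n (2*p) i * Mi n i (n - 2*p'))"
  proof (rule sum.cong[OF refl])
    fix i assume "i \<in> {..n}"
    then have "Mi n i (n - 2*p') = (-1)^i * Mi n i (2*p')" using F3i[of i n "2*p'"] n p' ev by auto
    then show "(if odd i then 2 * f i else 0) = f i - Mi n (2*p) i * Mi n i (n - 2*p')"
      unfolding f_def by (cases "odd i") auto
  qed
  also have "\<dots> = (if p = p' then 2^n else 0)" using S1 S2 by (simp add: sum_subtractf)
  finally have A: "(\<Sum>i\<le>n. if odd i then 2 * f i else 0) = (if p = p' then 2^n else 0)" .
  have sym: "f (n - i) = f i" if "i \<le> n" for i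
  proof -
    have "Mi n (2*p) (n-i) = (-1)^(2*p) * Mi n (2*p) i" using F3i[of "2*p" n i] that n p ev by auto
    moreover have "Mi n (n-i) (2*p') = (-1)^(2*p') * Mi n i (2*p')" using F4i[of i n "2*p'"] that n p' ev by auto
    ultimately show ?thesis unfolding f_def by simp
  qed
  have B: "(\<Sum>i\<le>n. if odd i then f i else 0) = 2 * (\<Sum>q<m div 2. f (2*q+1)) + (if odd m then f m else 0)"
    by (rule sym_odd_sum[where f=f, OF n sym])
  have "(\<Sum>i\<le>n. if odd i then 2 * f i else 0) = 2 * (\<Sum>i\<le>n. if odd i then f i else 0)"
    by (simp add: sum_distrib_left if_distrib cong: if_cong)
  then have "2 * (2 * (\<Sum>q<m div 2. f (2*q+1)) + (if odd m then f m else 0)) = (if p = p' then 2^n else 0)"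
    using A B by simp
  then show ?thesis unfolding f_def by (cases "odd m") auto
qed

lemma Ib:
  assumes n: "n = 2*m" and i: "odd i" "i \<le> m" and i': "odd i'" "i' \<le> m"
  shows "4 * (\<Sum>p<(m+1) div 2. Mi n i (2*p) * Mi n (2*p) i') = (if i = i' then (if i = m then 2 else 1) * 2^n else 0)"
proof -
  define g where "g j = Mi n i j * Mi n j i'" for j
  have ev: "even n" using n by simp
  have S1: "(\<Sum>j\<le>n. g j) = (if i = i' then 2^n else 0)"
    using F2i[of i n i'] n i i' unfolding g_def by auto
  have S2: "(\<Sum>j\<le>n. Mi n i j * Mi n j (n - i')) = (if i = m \<and> i' = m then 2^n else 0)"
    using F2i[of i n "n - i'"] n i i' by auto
  have "(\<Sum>j\<le>n. if even j then 2 * g j else 0) = (\<Sum>j\<le>n. g j + Mi n i j * Mi n j (n - i'))"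
  proof (rule sum.cong[OF refl])
    fix j assume "j \<in> {..n}"
    then have "Mi n j (n - i') = (-1)^j * Mi n j i'" using F3i[of j n i'] n i' ev by auto
    then show "(if even j then 2 * g j else 0) = g j + Mi n i j * Mi n j (n - i')"
      unfolding g_def by (cases "even j") auto
  qed
  also have "\<dots> = (if i = i' then 2^n else 0) + (if i = m \<and> i' = m then 2^n else 0)"
    using S1 S2 by (simp add: sum.distrib)
  finally have A: "(\<Sum>j\<le>n. if even j then 2 * g j else 0) = (if i = i' then 2^n else 0) + (if i = m \<and> i' = m then 2^n else 0)" .
  have sym: "g (n - j) = g j" if "j \<le> n" for j
  proof -
    have "Mi n i (n-j) = (-1)^i * Mi n i j" using F3i[of i n j] that n i ev by auto
    moreover have "Mi n (n-j) i' = (-1)^i' * Mi n j i'" using F4i[of j n i'] that n i' ev by auto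
    ultimately show ?thesis unfolding g_def using i i' by simp
  qed
  have B: "(\<Sum>j\<le>n. if even j then g j else 0) = 2 * (\<Sum>p<(m+1) div 2. g (2*p)) + (if even m then g m else 0)"
    by (rule sym_even_sum[where f=g, OF n sym])
  have gm: "(if even m then g m else 0) = 0"
  proof (cases "even m")
    case True
    have "Mi n (n-m) i' = (-1)^i' * Mi n m i'" using F4i[of m n i'] n i' ev by auto
    then have "Mi n m i' = - Mi n m i'" using n i' by simp
    then have "Mi n m i' = 0" by simp
    then show ?thesis unfolding g_def by simp
  qed simp
  have "(\<Sum>j\<le>n. if even j then 2 * g j else 0) = 2 * (\<Sum>j\<le>n. if even j then g j else 0)"
    by (simp add: sum_distrib_left if_distrib cong: if_cong)
  then have "4 * (\<Sum>p<(m+1) div 2. g (2*p)) = (if i = i' then 2^n else 0) + (if i = m \<and> i' = m then 2^n else 0)"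
    using A B gm by simp
  then show ?thesis unfolding g_def by (auto split: if_splits)
qed

lemma Ic:
  assumes n: "n = 2*m" and p: "2*p < m" and p': "2*p' < m"
  shows "4 * (\<Sum>q<m div 2. int (n choose (2*q+1)) * Mi n (2*q+1) (2*p) * Mi n (2*q+1) (2*p'))
     + (if odd m then 2 * (int (n choose m) * Mi n m (2*p) * Mi n m (2*p')) else 0)
     = (if p = p' then 2^n * int (n choose (2*p)) else 0)"
proof -
  define h where "h i = int (n choose i) * Mi n i (2*p) * Mi n i (2*p')" for i
  have ev: "even n" using n by simp
  have A1: "(\<Sum>i\<le>n. int (n choose i) * Mi n i (2*p) * Mi n i (2*p')) = (if p = p' then 2^n * int (n choose (2*p)) else 0)"
    using F1i[of "2*p" n "2*p'"] n p p' by auto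
  have A2: "(\<Sum>i\<le>n. int (n choose i) * Mi n i (2*p) * Mi n i (n - 2*p')) = 0"
    using F1i[of "2*p" n "n - 2*p'"] n p p' by auto
  have A3: "(\<Sum>i\<le>n. int (n choose i) * Mi n i (n - 2*p) * Mi n i (2*p')) = 0"
    using F1i[of "n - 2*p" n "2*p'"] n p p' by auto
  have A4: "(\<Sum>i\<le>n. int (n choose i) * Mi n i (n - 2*p) * Mi n i (n - 2*p')) = (if p = p' then 2^n * int (n choose (2*p)) else 0)"
    using F1i[of "n - 2*p" n "n - 2*p'"] n p p' binomial_symmetric[of "2*p" n] by auto
  have "(\<Sum>i\<le>n. if odd i then 4 * h i else 0) =
     (\<Sum>i\<le>n. int (n choose i) * Mi n i (2*p) * Mi n i (2*p') - int (n choose i) * Mi n i (2*p) * Mi n i (n - 2*p')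
        - int (n choose i) * Mi n i (n - 2*p) * Mi n i (2*p') + int (n choose i) * Mi n i (n - 2*p) * Mi n i (n - 2*p'))"
  proof (rule sum.cong[OF refl])
    fix i assume "i \<in> {..n}"
    then have e1: "Mi n i (n - 2*p') = (-1)^i * Mi n i (2*p')" and e2: "Mi n i (n - 2*p) = (-1)^i * Mi n i (2*p)"
      using F3i[of i n "2*p'"] F3i[of i n "2*p"] n p p' ev by auto
    show "(if odd i then 4 * h i else 0) = int (n choose i) * Mi n i (2*p) * Mi n i (2*p') - int (n choose i) * Mi n i (2*p) * Mi n i (n - 2*p')
        - int (n choose i) * Mi n i (n - 2*p) * Mi n i (2*p') + int (n choose i) * Mi n i (n - 2*p) * Mi n i (n - 2*p')"
      unfolding e1 e2 h_def by (cases "odd i") auto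
  qed
  also have "\<dots> = 2 * (if p = p' then 2^n * int (n choose (2*p)) else 0)"
    using A1 A2 A3 A4 by (simp add: sum.distrib sum_subtractf)
  finally have A: "(\<Sum>i\<le>n. if odd i then 4 * h i else 0) = 2 * (if p = p' then 2^n * int (n choose (2*p)) else 0)" .
  have sym: "h (n - i) = h i" if "i \<le> n" for i
  proof -
    have "Mi n (n-i) (2*p) = (-1)^(2*p) * Mi n i (2*p)" using F4i[of i n "2*p"] that n p ev by auto
    moreover have "Mi n (n-i) (2*p') = (-1)^(2*p') * Mi n i (2*p')" using F4i[of i n "2*p'"] that n p' ev by auto
    moreover have "n choose (n - i) = n choose i" using binomial_symmetric[OF that] by simp
    ultimately show ?thesis unfolding h_def by simp
  qed
  have B: "(\<Sum>i\<le>n. if odd i then h i else 0) = 2 * (\<Sum>q<m div 2. h (2*q+1)) + (if odd m then h m else 0)"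
    by (rule sym_odd_sum[where f=h, OF n sym])
  have "(\<Sum>i\<le>n. if odd i then 4 * h i else 0) = 4 * (\<Sum>i\<le>n. if odd i then h i else 0)"
    by (simp add: sum_distrib_left if_distrib cong: if_cong)
  then have "4 * (2 * (\<Sum>q<m div 2. h (2*q+1)) + (if odd m then h m else 0)) = 2 * (if p = p' then 2^n * int (n choose (2*p)) else 0)"
    using A B by simp
  then show ?thesis unfolding h_def by (cases "odd m"; cases "p = p'") (auto simp: mult_ac)
qed

lemma filter_even:
  assumes "n = 2*m"
  shows "filter (\<lambda>i. even i \<and> 2*i < n) [0..<n] = map (\<lambda>p. 2*p) [0..<(m+1) div 2]"
proof (rule sorted_distinct_set_unique)
  show "sorted (map (\<lambda>p. 2*p) [0..<(m+1) div 2])" by (simp add: sorted_iff_nth_mono)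
  show "distinct (map (\<lambda>p. 2*p) [0..<(m+1) div 2])" by (simp add: distinct_map inj_on_def)
  show "set (filter (\<lambda>i. even i \<and> 2*i < n) [0..<n]) = set (map (\<lambda>p. 2*p) [0..<(m+1) div 2])"
  proof (rule set_eqI, rule iffI)
    fix x assume "x \<in> set (filter (\<lambda>i. even i \<and> 2*i < n) [0..<n])"
    then have "even x" "2*x < n" by auto
    then have "x = 2*(x div 2)" "x div 2 < (m+1) div 2" using assms by presburger+
    then show "x \<in> set (map (\<lambda>p. 2*p) [0..<(m+1) div 2])" by (auto simp: image_iff)
  next
    fix x assume "x \<in> set (map (\<lambda>p. 2*p) [0..<(m+1) div 2])"
    then obtain k where "x = 2*k" "k < (m+1) div 2" by auto
    then show "x \<in> set (filter (\<lambda>i. even i \<and> 2*i < n) [0..<n])" using assms by auto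
  qed
qed (simp_all add: sorted_wrt_filter)

lemma filter_odd:
  assumes "n = 2*m"
  shows "filter (\<lambda>i. odd i \<and> 2*i < n) [0..<n] = map (\<lambda>q. 2*q+1) [0..<m div 2]"
proof (rule sorted_distinct_set_unique)
  show "sorted (map (\<lambda>q. 2*q+1) [0..<m div 2])" by (simp add: sorted_iff_nth_mono)
  show "distinct (map (\<lambda>q. 2*q+1) [0..<m div 2])" by (simp add: distinct_map inj_on_def)
  show "set (filter (\<lambda>i. odd i \<and> 2*i < n) [0..<n]) = set (map (\<lambda>q. 2*q+1) [0..<m div 2])"
  proof (rule set_eqI, rule iffI)
    fix x assume "x \<in> set (filter (\<lambda>i. odd i \<and> 2*i < n) [0..<n])"
    then have "odd x" "2*x < n" by auto
    then have "x = 2*(x div 2)+1" "x div 2 < m div 2" using assms by presburger+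
    then show "x \<in> set (map (\<lambda>q. 2*q+1) [0..<m div 2])" by (auto simp: image_iff)
  next
    fix x assume "x \<in> set (map (\<lambda>q. 2*q+1) [0..<m div 2])"
    then obtain k where "x = 2*k+1" "k < m div 2" by auto
    then show "x \<in> set (filter (\<lambda>i. odd i \<and> 2*i < n) [0..<n])" using assms by auto
  qed
qed (simp_all add: sorted_wrt_filter)

lemma phi_even_eq: assumes "n = 2*m" shows "phi_even n = map (\<lambda>p. of_nat (n choose (2*p))) [0..<(m+1) div 2]"
  unfolding phi_even_def filter_even[OF assms] map_map o_def ..

lemma phi_odd_eq: assumes "n = 2*m" shows "phi_odd n = map (\<lambda>q. of_nat (n choose (2*q+1))) [0..<m div 2]"
  unfolding phi_odd_def filter_odd[OF assms] map_map o_def ..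

lemma Iak:
  assumes n: "n = 2*m" and p: "2*p < m" and p': "2*p' < m"
  shows "4 * (\<Sum>q<m div 2. (Mg n (2*p) (2*q+1) :: 'a::comm_ring_1) * Mg n (2*q+1) (2*p')) + (if odd m then 2 * (Mg n (2*p) m * Mg n m (2*p')) else 0) = (if p = p' then 2^n else 0)"
proof -
  have "(of_int (4 * (\<Sum>q<m div 2. Mi n (2*p) (2*q+1) * Mi n (2*q+1) (2*p')) + (if odd m then 2 * (Mi n (2*p) m * Mi n m (2*p')) else 0)) :: 'a)
       = of_int (if p = p' then 2^n else 0)"
    using Ia[OF assms] by simp
  then show ?thesis by (cases "odd m"; cases "p = p'") (simp_all add: Mg_of_int[where 'b='a] of_int_sum)
qed

lemma Ibk:
  assumes n: "n = 2*m" and i: "odd i" "i \<le> m" and i': "odd i'" "i' \<le> m"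
  shows "4 * (\<Sum>p<(m+1) div 2. (Mg n i (2*p) :: 'a::comm_ring_1) * Mg n (2*p) i') = (if i = i' then (if i = m then 2 else 1) * 2^n else 0)"
proof -
  have "(of_int (4 * (\<Sum>p<(m+1) div 2. Mi n i (2*p) * Mi n (2*p) i')) :: 'a) = of_int (if i = i' then (if i = m then 2 else 1) * 2^n else 0)"
    using Ib[OF assms] by simp
  then show ?thesis by (cases "i = i'"; cases "i = m") (simp_all add: Mg_of_int[where 'b='a] of_int_sum)
qed

lemma Ick:
  assumes n: "n = 2*m" and p: "2*p < m" and p': "2*p' < m"
  shows "4 * (\<Sum>q<m div 2. of_nat (n choose (2*q+1)) * (Mg n (2*q+1) (2*p) :: 'a::comm_ring_1) * Mg n (2*q+1) (2*p'))
     + (if odd m then 2 * (of_nat (n choose m) * Mg n m (2*p) * Mg n m (2*p')) else 0)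
     = (if p = p' then 2^n * of_nat (n choose (2*p)) else 0)"
proof -
  have "(of_int (4 * (\<Sum>q<m div 2. int (n choose (2*q+1)) * Mi n (2*q+1) (2*p) * Mi n (2*q+1) (2*p'))
     + (if odd m then 2 * (int (n choose m) * Mi n m (2*p) * Mi n m (2*p')) else 0)) :: 'a)
     = of_int (if p = p' then 2^n * int (n choose (2*p)) else 0)"
    using Ic[OF assms] by simp
  then show ?thesis by (cases "odd m"; cases "p = p'") (simp_all add: Mg_of_int[where 'b='a] of_int_sum)
qed

lemma sum_scale:
  fixes X Y :: "nat \<Rightarrow> 'a::field"
  shows "(\<Sum>q\<in>S. (X q / D) * (Y q / D)) = (\<Sum>q\<in>S. X q * Y q) / (D * D)"
  by (simp only: times_divide_times_eq sum_divide_distrib)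

lemma sum_scale3:
  fixes X Y E :: "nat \<Rightarrow> 'a::field"
  shows "(\<Sum>q\<in>S. E q * (X q / D) * (Y q / D)) = (\<Sum>q\<in>S. E q * (X q * Y q)) / (D * D)"
proof -
  have t: "E x * (X x / D) * (Y x / D) = (E x * (X x * Y x)) / (D*D)" for x
  proof -
    have "E x * (X x / D) * (Y x / D) = E x * ((X x / D) * (Y x / D))" by (rule mult.assoc)
    also have "\<dots> = E x * ((X x * Y x) / (D*D))" by (simp only: times_divide_times_eq)
    also have "\<dots> = (E x * (X x * Y x)) / (D*D)" by (rule times_divide_eq_right)
    finally show ?thesis .
  qed
  show ?thesis unfolding t by (simp only: sum_divide_distrib)
qed

lemma sum_Suc_shift: "(\<Sum>q<Suc k. g q) = g 0 + (\<Sum>q<k. g (Suc q))"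
  for g :: "nat \<Rightarrow> 'b::comm_monoid_add"
  by (induction k) (simp_all add: add.assoc)

lemma case_even:
  fixes n m :: nat
  assumes char: "(2::'a::field) \<noteq> 0" and n: "n = 2*m" and me: "even m"
  shows "isometric (phi_even n :: 'a list) (phi_odd n)"
proof -
  define D where "D = (2::'a)^m"
  have DD: "D * D = 2^n" unfolding D_def n by (simp add: power_add[symmetric] mult_2)
  have Dn: "(2::'a)^n \<noteq> 0" using char by simp
  have eo: "(m+1) div 2 = m div 2" using me by presburger
  have lds: "length (phi_even n :: 'a list) = m div 2" using phi_even_eq[where 'a='a, OF n] eo by simp
  have les: "length (phi_odd n :: 'a list) = m div 2" using phi_odd_eq[where 'a='a, OF n] by simp
  have dsn: "(phi_even n :: 'a list) ! p = of_nat (n choose (2*p))" if "p < m div 2" for p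
    using phi_even_eq[where 'a='a, OF n] eo that by simp
  have esn: "(phi_odd n :: 'a list) ! q = of_nat (n choose (2*q+1))" if "q < m div 2" for q
    using phi_odd_eq[where 'a='a, OF n] that by simp
  have bnd: "2*p < m" "2*p+1 < m" if "p < m div 2" for p using that me by presburger+
  have QP: "(\<Sum>q<length (phi_odd n :: 'a list). (2 * Mg n (2*p) (2*q+1)) / D * ((2 * Mg n (2*q+1) (2*p')) / D)) = (if p = p' then 1 else 0)"
    if p: "p < length (phi_even n :: 'a list)" and p': "p' < length (phi_even n :: 'a list)" for p p'
  proof -
    have p2: "2*p < m" "2*p' < m" using p p' lds bnd by auto
    have "(\<Sum>q<length (phi_odd n :: 'a list). (2 * Mg n (2*p) (2*q+1)) / D * ((2 * Mg n (2*q+1) (2*p')) / D))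
        = (\<Sum>q<m div 2. (2 * Mg n (2*p) (2*q+1)) * (2 * Mg n (2*q+1) (2*p'))) / (D*D)"
      unfolding les by (rule sum_scale)
    also have "\<dots> = (4 * (\<Sum>q<m div 2. Mg n (2*p) (2*q+1) * Mg n (2*q+1) (2*p'))) / (D*D)"
      by (simp add: sum_distrib_left mult_ac)
    also have "\<dots> = (if p = p' then 2^n else 0) / (D*D)" using Iak[where 'a='a, OF n p2] me by simp
    also have "\<dots> = (if p = p' then 1 else 0)" using DD Dn char by simp
    finally show ?thesis .
  qed
  have PQ: "(\<Sum>p<length (phi_even n :: 'a list). (2 * Mg n (2*q+1) (2*p)) / D * ((2 * Mg n (2*p) (2*q'+1)) / D)) = (if q = q' then 1 else 0)"
    if q: "q < length (phi_odd n :: 'a list)" and q': "q' < length (phi_odd n :: 'a list)" for q q'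
  proof -
    have q2: "2*q+1 < m" "2*q'+1 < m" using q q' les bnd by auto
    have "(\<Sum>p<length (phi_even n :: 'a list). (2 * Mg n (2*q+1) (2*p)) / D * ((2 * Mg n (2*p) (2*q'+1)) / D))
        = (\<Sum>p<(m+1) div 2. (2 * Mg n (2*q+1) (2*p)) * (2 * Mg n (2*p) (2*q'+1))) / (D*D)"
      unfolding lds eo by (rule sum_scale)
    also have "\<dots> = (4 * (\<Sum>p<(m+1) div 2. Mg n (2*q+1) (2*p) * Mg n (2*p) (2*q'+1))) / (D*D)"
      by (simp add: sum_distrib_left mult_ac)
    also have "\<dots> = (if 2*q+1 = 2*q'+1 then (if 2*q+1 = m then 2 else 1) * 2^n else 0) / (D*D)"
      using Ibk[where 'a='a, OF n, of "2*q+1" "2*q'+1"] q2 by simp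
    also have "\<dots> = (if q = q' then 1 else 0)" using DD Dn char q2 by simp
    finally show ?thesis .
  qed
  have FF: "(\<Sum>q<length (phi_odd n :: 'a list). (phi_odd n ! q) * ((2 * Mg n (2*q+1) (2*p)) / D) * ((2 * Mg n (2*q+1) (2*p')) / D))
      = (if p = p' then (phi_even n :: 'a list) ! p else 0)"
    if p: "p < length (phi_even n :: 'a list)" and p': "p' < length (phi_even n :: 'a list)" for p p'
  proof -
    have p2: "2*p < m" "2*p' < m" using p p' lds bnd by auto
    have "(\<Sum>q<length (phi_odd n :: 'a list). (phi_odd n ! q) * ((2 * Mg n (2*q+1) (2*p)) / D) * ((2 * Mg n (2*q+1) (2*p')) / D))
        = (\<Sum>q<m div 2. of_nat (n choose (2*q+1)) * ((2 * Mg n (2*q+1) (2*p)) / D) * ((2 * Mg n (2*q+1) (2*p')) / D))"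
      unfolding les by (rule sum.cong[OF refl]) (simp add: esn)
    also have "\<dots> = (\<Sum>q<m div 2. of_nat (n choose (2*q+1)) * ((2 * Mg n (2*q+1) (2*p)) * (2 * Mg n (2*q+1) (2*p')))) / (D*D)"
      by (rule sum_scale3)
    also have "\<dots> = (4 * (\<Sum>q<m div 2. of_nat (n choose (2*q+1)) * Mg n (2*q+1) (2*p) * Mg n (2*q+1) (2*p'))) / (D*D)"
      by (simp add: sum_distrib_left mult_ac)
    also have "\<dots> = (if p = p' then 2^n * of_nat (n choose (2*p)) else 0) / (D*D)"
      using Ick[where 'a='a, OF n p2] me by simp
    also have "\<dots> = (if p = p' then (phi_even n :: 'a list) ! p else 0)"
      using DD Dn char dsn[of p] p lds by (cases "p = p'") simp_all
    finally show ?thesis .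
  qed
  show ?thesis
    by (rule iso_mat[where P="\<lambda>q p. (2 * Mg n (2*q+1) (2*p)) / D" and Q="\<lambda>p q. (2 * Mg n (2*p) (2*q+1)) / D", OF QP PQ FF])
qed

lemma case_odd:
  fixes n m :: nat
  assumes char: "(2::'a::field) \<noteq> 0" and n: "n = 2*m" and mo: "odd m"
  shows "isometric (phi_even n :: 'a list) ((2 * of_nat (n choose m)) # phi_odd n)"
proof -
  define ko where "ko = m div 2"
  define D where "D = (2::'a)^m"
  define ix where "ix q = (if q = 0 then m else 2*(q-1)+1)" for q
  define cq where "cq q = (if q = (0::nat) then 1 else (2::'a))" for q
  define es where "es = (2 * of_nat (n choose m)) # (phi_odd n :: 'a list)"
  have DD: "D * D = 2^n" unfolding D_def n by (simp add: power_add[symmetric] mult_2)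
  have Dn: "(2::'a)^n \<noteq> 0" using char by simp
  have eo: "(m+1) div 2 = Suc ko" using mo unfolding ko_def by presburger
  have lds: "length (phi_even n :: 'a list) = Suc ko" using phi_even_eq[where 'a='a, OF n] eo by (simp del: upt_Suc)
  have les: "length es = Suc ko" using phi_odd_eq[where 'a='a, OF n] unfolding es_def ko_def by simp
  have dsn: "(phi_even n :: 'a list) ! p = of_nat (n choose (2*p))" if "p < Suc ko" for p
    using phi_even_eq[where 'a='a, OF n] eo that by (simp del: upt_Suc)
  have esn: "(phi_odd n :: 'a list) ! q = of_nat (n choose (2*q+1))" if "q < ko" for q
    using phi_odd_eq[where 'a='a, OF n] that unfolding ko_def by simp
  have esn2: "(phi_odd n :: 'a list) ! q = of_nat (n choose (Suc (2*q)))" if "q < ko" for q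
    using esn[OF that] by simp
  have bnd: "2*p < m" if "p < Suc ko" for p using that mo unfolding ko_def by presburger
  have bnd2: "2*q+1 < m" if "q < ko" for q using that mo unfolding ko_def by presburger
  have ixS: "ix (Suc k) = 2*k+1" for k unfolding ix_def by simp
  have ix0: "ix 0 = m" unfolding ix_def by simp
  have ixo: "odd (ix q) \<and> ix q \<le> m" if "q < Suc ko" for q
  proof (cases q)
    case 0 then show ?thesis using mo ix0 by simp
  next
    case (Suc k) then have "k < ko" using that by simp
    then show ?thesis using bnd2[of k] Suc ixS by simp
  qed
  have ixm: "ix q = m \<longleftrightarrow> q = 0" if "q < Suc ko" for q
  proof (cases q)
    case 0 then show ?thesis using ix0 by simp
  next
    case (Suc k) then have "k < ko" using that by simp
    then show ?thesis using bnd2[of k] Suc ixS by simp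
  qed
  have ixinj: "ix q = ix q' \<longleftrightarrow> q = q'" if "q < Suc ko" "q' < Suc ko" for q q'
  proof (cases "q = 0 \<or> q' = 0")
    case True then show ?thesis using ixm[OF that(1)] ixm[OF that(2)] by auto
  next
    case False
    then obtain k k' where "q = Suc k" "q' = Suc k'" by (metis not0_implies_Suc)
    then show ?thesis using ixS by simp
  qed
  have QP: "(\<Sum>q<length es. (2 * Mg n (2*p) (ix q)) / D * ((cq q * Mg n (ix q) (2*p')) / D)) = (if p = p' then 1 else 0)"
    if p: "p < length (phi_even n :: 'a list)" and p': "p' < length (phi_even n :: 'a list)" for p p'
  proof -
    have p2: "2*p < m" "2*p' < m" using p p' lds bnd by auto
    have "(\<Sum>q<length es. (2 * Mg n (2*p) (ix q)) / D * ((cq q * Mg n (ix q) (2*p')) / D))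
        = (\<Sum>q<Suc ko. (2 * Mg n (2*p) (ix q)) * (cq q * Mg n (ix q) (2*p'))) / (D*D)"
      unfolding les by (rule sum_scale)
    also have "(\<Sum>q<Suc ko. (2 * Mg n (2*p) (ix q)) * (cq q * Mg n (ix q) (2*p')))
        = 4 * (\<Sum>q<m div 2. Mg n (2*p) (2*q+1) * Mg n (2*q+1) (2*p')) + 2 * (Mg n (2*p) m * Mg n m (2*p'))"
      unfolding sum_Suc_shift by (simp add: ix_def cq_def ko_def sum_distrib_left mult_ac)
    also have "\<dots> = (if p = p' then 2^n else 0)" using Iak[where 'a='a, OF n p2] mo by simp
    also have "(if p = p' then 2^n else 0) / (D*D) = (if p = p' then 1 else (0::'a))" using DD Dn char by simp
    finally show ?thesis .
  qed
  have PQ: "(\<Sum>p<length (phi_even n :: 'a list). (cq q * Mg n (ix q) (2*p)) / D * ((2 * Mg n (2*p) (ix q')) / D)) = (if q = q' then 1 else 0)"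
    if q: "q < length es" and q': "q' < length es" for q q'
  proof -
    have q2: "q < Suc ko" "q' < Suc ko" using q q' les by auto
    define S where "S = (\<Sum>p<(m+1) div 2. Mg n (ix q) (2*p) * (Mg n (2*p) (ix q') :: 'a))"
    have S4: "4 * S = (if ix q = ix q' then (if ix q = m then 2 else 1) * 2^n else 0)"
      unfolding S_def using Ibk[where 'a='a, OF n conjunct1[OF ixo[OF q2(1)]] conjunct2[OF ixo[OF q2(1)]] conjunct1[OF ixo[OF q2(2)]] conjunct2[OF ixo[OF q2(2)]]] .
    have S2: "cq q * 2 * S = (if q = q' then 2^n else 0)"
    proof (cases "q = 0")
      case True
      then have h4: "4 * S = 2 * (if q = q' then 2^n else 0)"
        using S4 ixm[OF q2(1)] ixm[OF q2(2)] ixinj[OF q2] by (auto simp: mult_ac split: if_splits)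
      have e: "(4::'a) = 2*2" by simp
      have "2 * (2 * S) = 2 * (if q = q' then 2^n else 0)" using h4 by (simp only: e mult.assoc)
      then have "2 * S = (if q = q' then 2^n else 0)" using mult_left_cancel[OF char] by blast
      then show ?thesis using True unfolding cq_def by simp
    next
      case False
      then show ?thesis
        using S4 ixm[OF q2(1)] ixinj[OF q2] unfolding cq_def by (auto simp: mult_ac split: if_splits)
    qed
    have "(\<Sum>p<length (phi_even n :: 'a list). (cq q * Mg n (ix q) (2*p)) / D * ((2 * Mg n (2*p) (ix q')) / D))
        = (\<Sum>p<(m+1) div 2. (cq q * Mg n (ix q) (2*p)) * (2 * Mg n (2*p) (ix q'))) / (D*D)"
      unfolding lds eo by (rule sum_scale)
    also have "(\<Sum>p<(m+1) div 2. (cq q * Mg n (ix q) (2*p)) * (2 * Mg n (2*p) (ix q'))) = cq q * 2 * S"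
      unfolding S_def by (simp add: sum_distrib_left mult_ac)
    also have "\<dots> = (if q = q' then 2^n else 0)" by (rule S2)
    also have "(if q = q' then 2^n else 0) / (D*D) = (if q = q' then 1 else (0::'a))" using DD Dn char by simp
    finally show ?thesis .
  qed
  have FF: "(\<Sum>q<length es. (es ! q) * ((cq q * Mg n (ix q) (2*p)) / D) * ((cq q * Mg n (ix q) (2*p')) / D))
      = (if p = p' then (phi_even n :: 'a list) ! p else 0)"
    if p: "p < length (phi_even n :: 'a list)" and p': "p' < length (phi_even n :: 'a list)" for p p'
  proof -
    have p2: "2*p < m" "2*p' < m" using p p' lds bnd by auto
    have "(\<Sum>q<length es. (es ! q) * ((cq q * Mg n (ix q) (2*p)) / D) * ((cq q * Mg n (ix q) (2*p')) / D))
        = (\<Sum>q<Suc ko. (es ! q) * ((cq q * Mg n (ix q) (2*p)) * (cq q * Mg n (ix q) (2*p')))) / (D*D)"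
      unfolding les by (rule sum_scale3)
    also have "(\<Sum>q<Suc ko. (es ! q) * ((cq q * Mg n (ix q) (2*p)) * (cq q * Mg n (ix q) (2*p'))))
       = 2 * of_nat (n choose m) * (Mg n m (2*p) * Mg n m (2*p')) + (\<Sum>q<ko. of_nat (n choose (2*q+1)) * ((2 * Mg n (2*q+1) (2*p)) * (2 * Mg n (2*q+1) (2*p'))))"
      unfolding sum_Suc_shift
      apply (simp add: ix_def cq_def es_def)
      apply (rule sum.cong[OF refl])
      apply (simp add: esn2)
      done
    also have "\<dots> = 4 * (\<Sum>q<m div 2. of_nat (n choose (2*q+1)) * Mg n (2*q+1) (2*p) * Mg n (2*q+1) (2*p'))
     + 2 * (of_nat (n choose m) * Mg n m (2*p) * Mg n m (2*p'))"
      unfolding ko_def by (simp add: sum_distrib_left mult_ac)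
    also have "\<dots> = (if p = p' then 2^n * of_nat (n choose (2*p)) else 0)"
      using Ick[where 'a='a, OF n p2] mo by simp
    also have "(if p = p' then 2^n * of_nat (n choose (2*p)) else 0) / (D*D) = (if p = p' then (phi_even n :: 'a list) ! p else 0)"
      using DD Dn char dsn[of p] p lds by (cases "p = p'") simp_all
    finally show ?thesis .
  qed
  have "isometric (phi_even n :: 'a list) es"
    by (rule iso_mat[where P="\<lambda>q p. (cq q * Mg n (ix q) (2*p)) / D" and Q="\<lambda>p q. (2 * Mg n (2*p) (ix q)) / D", OF QP PQ FF])
  then show ?thesis unfolding es_def .
qed

theorem theoremB:
  fixes n :: nat
  assumes char: "(2::'a::field) \<noteq> 0"
    and pos: "n > 0" and ev: "even n"
  shows "(n mod 4 = 0 \<longrightarrow> isometric (phi_even n :: 'a list) (phi_odd n))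
       \<and> (n mod 4 = 2 \<longrightarrow> isometric (phi_even n :: 'a list)
                             ((2 * of_nat (n choose (n div 2))) # phi_odd n))"
proof -
  define m where "m = n div 2"
  have n: "n = 2*m" using ev m_def by simp
  show ?thesis
  proof (intro conjI impI)
    assume "n mod 4 = 0"
    then have "even m" using n by presburger
    then show "isometric (phi_even n :: 'a list) (phi_odd n)" using case_even[OF char n] by blast
  next
    assume "n mod 4 = 2"
    then have mo: "odd m" using n by presburger
    have "n div 2 = m" using m_def by simp
    then show "isometric (phi_even n :: 'a list) ((2 * of_nat (n choose (n div 2))) # phi_odd n)"
      using case_odd[OF char n mo] by simp
  qed
qed

end
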